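(* Let $g:[0,1]\to[0,1]$ be increasing with $g(0)=0$, $g(1)=1$, let $\mathbb P$ be a probability measure, $\delta>0$, and $\phi$ as in the context. For every $X\in\mathcal X$, $$\sup_{\mathbb Q\in\mathcal P_\phi(\mathbb P,\delta)}\rho^{\mathbb Q}_g(X)\le\rho^{\mathbb P}_{g\circ g_{\phi,\delta}}(X).$$ Moreover, if $\phi:[0,\infty)\to\mathbb R$ is strictly convex with $\lim_{x\to\infty}\phi(x)/x=\infty$ and $g$ is right-continuous on $[0,1)$, then $$\lim_{\delta\downarrow0}\sup_{\mathbb Q\in\mathcal P_\phi(\mathbb P,\delta)}\rho^{\mathbb Q}_g(X)=\lim_{\delta\downarrow0}\rho^{\mathbb P}_{g\circ g_{\phi,\delta}}(X)=\rho^{\mathbb P}_g(X).$$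
   Context: $\mathcal X$ is the set of bounded random variables on $(\Omega,\mathcal F)$. For increasing $h:[0,1]\to[0,1]$ with $h(0)=0$, $h(1)=1$ and a probability $\mathbb Q$, the distortion risk measure is $\rho^{\mathbb Q}_h(X)=\int_0^\infty h(\mathbb Q(X>x))\,\mathrm dx+\int_{-\infty}^0\big(h(\mathbb Q(X>x))-1\big)\,\mathrm dx$. $\phi:[0,\infty)\to\mathbb R\cup\{\infty\}$ convex with $\phi(1)=0$, $\phi(0)=\lim_{x\downarrow0}\phi(x)$; $D_\phi(\mathbb Q\|\mathbb P)=\mathbb E^{\mathbb P}[\phi(\mathrm d\mathbb Q/\mathrm d\mathbb P)]$; $\mathcal P_\phi(\mathbb P,\delta)=\{\mathbb Q\ll\mathbb P: D_\phi(\mathbb Q\|\mathbb P)\le\delta\}$. $g_{\phi,\delta}(0)=0$, $g_{\phi,\delta}(1)=1$, and $g_{\phi,\delta}(x)=\sup\{t\in[x,1]: x\phi(t/x)+(1-x)\phi((1-t)/(1-x))\le\delta\}$ for $x\in(0,1)$. *)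

theory Defs
  imports "HOL-Probability.Probability"
begin

definition distortion_risk :: "(real \<Rightarrow> real) \<Rightarrow> 'a measure \<Rightarrow> ('a \<Rightarrow> real) \<Rightarrow> real" where
  "distortion_risk h Q X =
     (LINT x:{0..}|lborel. h (measure Q {\<omega> \<in> space Q. X \<omega> > x}))
   + (LINT x:{..0}|lborel. h (measure Q {\<omega> \<in> space Q. X \<omega> > x}) - 1)"

definition convex_ereal_nonneg :: "(real \<Rightarrow> ereal) \<Rightarrow> bool" where
  "convex_ereal_nonneg \<phi> \<longleftrightarrow>
     (\<forall>x\<ge>0. \<forall>y\<ge>0. \<forall>t\<in>{0..1}. \<phi> (t * x + (1 - t) * y) \<le> ereal t * \<phi> x + ereal (1 - t) * \<phi> y)"

definition strictly_convex_ereal_nonneg :: "(real \<Rightarrow> ereal) \<Rightarrow> bool" where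
  "strictly_convex_ereal_nonneg \<phi> \<longleftrightarrow>
     (\<forall>x\<ge>0. \<forall>y\<ge>0. x \<noteq> y \<longrightarrow> (\<forall>t\<in>{0<..<1}. \<phi> (t * x + (1 - t) * y) < ereal t * \<phi> x + ereal (1 - t) * \<phi> y))"

definition admissible_phi :: "(real \<Rightarrow> ereal) \<Rightarrow> bool" where
  "admissible_phi \<phi> \<longleftrightarrow>
     (\<forall>x\<ge>0. \<phi> x \<noteq> -\<infinity>) \<and> convex_ereal_nonneg \<phi> \<and> \<phi> 1 = 0 \<and> (\<phi> \<longlongrightarrow> \<phi> 0) (at_right 0)"

text \<open>phi-divergence D_phi(Q||P) = E^P[phi(dQ/dP)], as positive part minus negative part.\<close>
definition phi_div :: "(real \<Rightarrow> ereal) \<Rightarrow> 'a measure \<Rightarrow> 'a measure \<Rightarrow> ereal" where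
  "phi_div \<phi> Q P =
     enn2ereal (\<integral>\<^sup>+\<omega>. e2ennreal (max 0 (\<phi> (enn2real (RN_deriv P Q \<omega>)))) \<partial>P)
   - enn2ereal (\<integral>\<^sup>+\<omega>. e2ennreal (max 0 (- \<phi> (enn2real (RN_deriv P Q \<omega>)))) \<partial>P)"

definition phi_ball :: "(real \<Rightarrow> ereal) \<Rightarrow> 'a measure \<Rightarrow> real \<Rightarrow> 'a measure set" where
  "phi_ball \<phi> P \<delta> = {Q. prob_space Q \<and> sets Q = sets P \<and> absolutely_continuous P Q
                          \<and> phi_div \<phi> Q P \<le> ereal \<delta>}"

definition g_phi :: "(real \<Rightarrow> ereal) \<Rightarrow> real \<Rightarrow> real \<Rightarrow> real" where
  "g_phi \<phi> \<delta> x =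
     (if x = 0 then 0 else if x = 1 then 1 else
      Sup {t \<in> {x..1}. ereal x * \<phi> (t / x) + ereal (1 - x) * \<phi> ((1 - t) / (1 - x)) \<le> ereal \<delta>})"

definition distortion_fun :: "(real \<Rightarrow> real) \<Rightarrow> bool" where
  "distortion_fun g \<longleftrightarrow> mono_on {0..1} g \<and> g ` {0..1} \<subseteq> {0..1} \<and> g 0 = 0 \<and> g 1 = 1"

end

theory Submission
  imports Defs
begin

definition domphi :: "(real \<Rightarrow> ereal) \<Rightarrow> real set" where
  "domphi \<phi> = {x. 0 \<le> x \<and> \<phi> x \<noteq> \<infinity>}"

definition psi :: "(real \<Rightarrow> ereal) \<Rightarrow> real \<Rightarrow> real" where
  "psi \<phi> x = real_of_ereal (\<phi> x)"

lemma adm_conv: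
  assumes "admissible_phi \<phi>" "0 \<le> x" "0 \<le> y" "0 \<le> t" "t \<le> 1"
  shows "\<phi> (t * x + (1 - t) * y) \<le> ereal t * \<phi> x + ereal (1 - t) * \<phi> y"
  using assms unfolding admissible_phi_def convex_ereal_nonneg_def by auto

lemma adm_ninf: "admissible_phi \<phi> \<Longrightarrow> 0 \<le> x \<Longrightarrow> \<phi> x \<noteq> -\<infinity>"
  unfolding admissible_phi_def by auto

lemma adm_one: "admissible_phi \<phi> \<Longrightarrow> \<phi> 1 = 0"
  unfolding admissible_phi_def by auto

lemma domphi_eq: "admissible_phi \<phi> \<Longrightarrow> x \<in> domphi \<phi> \<Longrightarrow> \<phi> x = ereal (psi \<phi> x)"
  unfolding domphi_def psi_def using adm_ninf[of \<phi> x] by (cases "\<phi> x") auto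

lemma one_domphi: "admissible_phi \<phi> \<Longrightarrow> 1 \<in> domphi \<phi>"
  unfolding domphi_def using adm_one[of \<phi>] by auto

lemma psi_one: "admissible_phi \<phi> \<Longrightarrow> psi \<phi> 1 = 0"
  unfolding psi_def using adm_one[of \<phi>] by auto

lemma domphi_conv:
  assumes a: "admissible_phi \<phi>" and x: "x \<in> domphi \<phi>" and y: "y \<in> domphi \<phi>" and t: "0 \<le> t" "t \<le> 1"
  shows "t * x + (1 - t) * y \<in> domphi \<phi>"
    and "psi \<phi> (t * x + (1 - t) * y) \<le> t * psi \<phi> x + (1 - t) * psi \<phi> y"
proof -
  have x0: "0 \<le> x" and y0: "0 \<le> y" using x y unfolding domphi_def by auto
  have "\<phi> (t * x + (1 - t) * y) \<le> ereal t * \<phi> x + ereal (1 - t) * \<phi> y"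
    using adm_conv[OF a x0 y0 t] .
  also have "\<dots> = ereal (t * psi \<phi> x + (1 - t) * psi \<phi> y)"
    using domphi_eq[OF a x] domphi_eq[OF a y] by simp
  finally have le: "\<phi> (t * x + (1 - t) * y) \<le> ereal (t * psi \<phi> x + (1 - t) * psi \<phi> y)" .
  have nn: "0 \<le> t * x + (1 - t) * y" using x0 y0 t by simp
  show dm: "t * x + (1 - t) * y \<in> domphi \<phi>"
    using le nn unfolding domphi_def by auto
  show "psi \<phi> (t * x + (1 - t) * y) \<le> t * psi \<phi> x + (1 - t) * psi \<phi> y"
    using le domphi_eq[OF a dm] by simp
qed

lemma convex_domphi: assumes a: "admissible_phi \<phi>" shows "convex (domphi \<phi>)"
  unfolding convex_def
proof (intro ballI allI impI)
  fix x y and u v :: real assume xy: "x \<in> domphi \<phi>" "y \<in> domphi \<phi>" and uv: "0 \<le> u" "0 \<le> v" "u + v = 1"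
  have "u * x + (1 - u) * y \<in> domphi \<phi>" using domphi_conv(1)[OF a xy, of u] uv by auto
  moreover have "v = 1 - u" using uv by simp
  ultimately show "u *\<^sub>R x + v *\<^sub>R y \<in> domphi \<phi>" by simp
qed

lemma convex_on_psi: assumes a: "admissible_phi \<phi>" shows "convex_on (domphi \<phi>) (psi \<phi>)"
proof (rule convex_onI)
  show "convex (domphi \<phi>)" using convex_domphi[OF a] .
  fix t x y :: real assume t: "0 < t" "t < 1" and xy: "x \<in> domphi \<phi>" "y \<in> domphi \<phi>"
  have "psi \<phi> ((1 - t) * x + (1 - (1 - t)) * y) \<le> (1 - t) * psi \<phi> x + (1 - (1 - t)) * psi \<phi> y"
    using domphi_conv(2)[OF a xy, of "1 - t"] t by auto
  then show "psi \<phi> ((1 - t) *\<^sub>R x + t *\<^sub>R y) \<le> (1 - t) * psi \<phi> x + t * psi \<phi> y" by simp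
qed

lemma subgrad:
  fixes f :: "real \<Rightarrow> real"
  assumes cv: "convex_on D f" and a: "a \<in> D" "a < c" and b: "b \<in> D" "c < b"
  shows "\<exists>s. \<forall>z\<in>D. f c + s * (z - c) \<le> f z"
proof -
  have cD: "c \<in> D" using atMostAtLeast_subset_convex[OF convex_on_imp_convex[OF cv] a(1) b(1)] a b by auto
  define S where "S = (\<lambda>z. (f z - f c) / (z - c)) ` {z\<in>D. z < c}"
  have slope: "(f z - f c) / (z - c) \<le> (f c - f w) / (c - w)" if "z \<in> D" "z < c" "w \<in> D" "c < w" for z w
    using convex_on_slope_le[OF cv that(1) that(3), of c] that by (smt (verit, ccfv_SIG) minus_divide_divide)
  have ne: "S \<noteq> {}" unfolding S_def using a by auto
  have bdd: "bdd_above S" unfolding S_def bdd_above_def using slope[OF _ _ b] by auto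
  define s where "s = Sup S"
  have "f c + s * (z - c) \<le> f z" if z: "z \<in> D" for z
  proof (cases z c rule: linorder_cases)
    case less
    have "(f z - f c) / (z - c) \<le> s" unfolding s_def
      by (rule cSup_upper[OF _ bdd]) (use z less in \<open>auto simp: S_def\<close>)
    then have "s * (z - c) \<le> f z - f c" using less by (simp add: divide_le_eq)
    then show ?thesis by simp
  next
    case equal then show ?thesis by simp
  next
    case greater
    have "s \<le> (f c - f z) / (c - z)" unfolding s_def
      by (rule cSup_least[OF ne]) (use slope[OF _ _ z greater] in \<open>auto simp: S_def\<close>)
    then have "s \<le> (f z - f c) / (z - c)" by (smt (verit) minus_divide_divide)
    then have "s * (z - c) \<le> f z - f c" using greater by (simp add: le_divide_eq)
    then show ?thesis by simp
  qed
  then show ?thesis by blast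
qed

lemma jensen_set:
  fixes M :: "'a measure" and Z :: "'a \<Rightarrow> real" and f :: "real \<Rightarrow> real"
  assumes cv: "convex_on D f" and A: "A \<in> sets M" "emeasure M A < \<infinity>" "0 < measure M A"
    and Zi: "integrable M (\<lambda>x. indicator A x * Z x)" and fZi: "integrable M (\<lambda>x. indicator A x * f (Z x))"
    and ZD: "AE x in M. x \<in> A \<longrightarrow> Z x \<in> D"
  defines "m \<equiv> (\<integral>x. indicator A x * Z x \<partial>M) / measure M A"
  shows "m \<in> D \<and> measure M A * f m \<le> (\<integral>x. indicator A x * f (Z x) \<partial>M)"
proof -
  define \<mu> where "\<mu> = measure M A"
  have IA: "integrable M (indicator A :: 'a \<Rightarrow> real)" using A by simp
  have intc: "(\<integral>x. indicator A x * c \<partial>M) = \<mu> * c" for c :: real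
    using A(1) by (simp add: \<mu>_def Int_absorb2 sets.sets_into_space mult.commute)
  have intZ: "(\<integral>x. indicator A x * Z x \<partial>M) = \<mu> * m" unfolding m_def \<mu>_def using A by simp
  show ?thesis
  proof (cases "\<exists>a\<in>D. \<exists>b\<in>D. a < m \<and> m < b")
    case True
    then obtain a b where ab: "a \<in> D" "b \<in> D" "a < m" "m < b" by blast
    have mD: "m \<in> D" using atMostAtLeast_subset_convex[OF convex_on_imp_convex[OF cv] ab(1,2)] ab by auto
    obtain s where s: "\<And>z. z \<in> D \<Longrightarrow> f m + s * (z - m) \<le> f z" using subgrad[OF cv ab(1,3) ab(2,4)] by blast
    have "(\<integral>x. indicator A x * (f m + s * (Z x - m)) \<partial>M) \<le> (\<integral>x. indicator A x * f (Z x) \<partial>M)"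
    proof (rule integral_mono_AE)
      show "integrable M (\<lambda>x. indicator A x * (f m + s * (Z x - m)))"
        using IA Zi by (simp add: algebra_simps)
      show "AE x in M. indicator A x * (f m + s * (Z x - m)) \<le> indicator A x * f (Z x)"
        using ZD by eventually_elim (auto simp: indicator_def s)
    qed (rule fZi)
    moreover have "(\<integral>x. indicator A x * (f m + s * (Z x - m)) \<partial>M) = \<mu> * f m"
    proof -
      have "(\<integral>x. indicator A x * (f m + s * (Z x - m)) \<partial>M)
          = (\<integral>x. indicator A x * (f m - s * m) + s * (indicator A x * Z x) \<partial>M)"
        by (simp add: algebra_simps)
      also have "\<dots> = (\<integral>x. indicator A x * (f m - s * m) \<partial>M) + (\<integral>x. s * (indicator A x * Z x) \<partial>M)"
        by (rule Bochner_Integration.integral_add) (use IA Zi in auto)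
      also have "\<dots> = \<mu> * (f m - s * m) + s * (\<mu> * m)"
        by (simp only: intc integral_mult_right_zero intZ)
      finally show ?thesis by (simp add: algebra_simps)
    qed
    ultimately show ?thesis using mD by (simp add: \<mu>_def)
  next
    case False
    then have cases: "(\<forall>d\<in>D. m \<le> d) \<or> (\<forall>d\<in>D. d \<le> m)" by (meson not_le)
    have AEm: "AE x in M. x \<in> A \<longrightarrow> Z x = m"
    proof -
      define \<sigma> :: real where "\<sigma> = (if (\<forall>d\<in>D. m \<le> d) then 1 else -1)"
      have sg: "\<forall>d\<in>D. 0 \<le> \<sigma> * (d - m)" using cases by (auto simp: \<sigma>_def)
      have int0: "(\<integral>x. indicator A x * (\<sigma> * (Z x - m)) \<partial>M) = 0"
      proof -
        have "(\<integral>x. indicator A x * (\<sigma> * (Z x - m)) \<partial>M) = (\<integral>x. \<sigma> * (indicator A x * Z x) - indicator A x * (\<sigma> * m) \<partial>M)"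
          by (simp add: algebra_simps)
        also have "\<dots> = (\<integral>x. \<sigma> * (indicator A x * Z x) \<partial>M) - (\<integral>x. indicator A x * (\<sigma> * m) \<partial>M)"
          by (rule Bochner_Integration.integral_diff) (use IA Zi in auto)
        also have "\<dots> = \<sigma> * (\<mu> * m) - \<mu> * (\<sigma> * m)"
          by (simp only: intc integral_mult_right_zero intZ)
        finally show ?thesis by simp
      qed
      have "AE x in M. indicator A x * (\<sigma> * (Z x - m)) = 0"
      proof (rule integral_nonneg_eq_0_iff_AE[THEN iffD1, OF _ _ int0])
        show "integrable M (\<lambda>x. indicator A x * (\<sigma> * (Z x - m)))"
          using IA Zi by (simp add: algebra_simps)
        show "AE x in M. 0 \<le> indicator A x * (\<sigma> * (Z x - m))"
          using ZD by eventually_elim (insert sg, auto simp: indicator_def)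
      qed
      then show ?thesis by eventually_elim (auto simp: indicator_def \<sigma>_def split: if_splits)
    qed
    have mD: "m \<in> D"
    proof (rule ccontr)
      assume "m \<notin> D"
      have "AE x in M. x \<notin> A" using AEm ZD by eventually_elim (use \<open>m \<notin> D\<close> in auto)
      then have "emeasure M A = 0"
        using AE_iff_measurable[OF A(1), of "\<lambda>x. x \<notin> A"] A(1) sets.sets_into_space by blast
      then show False using A(3) by (simp add: measure_def)
    qed
    have "(\<integral>x. indicator A x * f (Z x) \<partial>M) = (\<integral>x. indicator A x * f m \<partial>M)"
    proof (rule integral_cong_AE)
      show "(\<lambda>x. indicator A x * f (Z x)) \<in> borel_measurable M" using fZi by (rule borel_measurable_integrable)
      show "(\<lambda>x. indicator A x * f m) \<in> borel_measurable M" using IA borel_measurable_integrable by measurable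
      show "AE x in M. indicator A x * f (Z x) = indicator A x * f m" using AEm by eventually_elim (auto simp: indicator_def)
    qed
    moreover have "A \<inter> space M = A" using A(1) sets.sets_into_space by blast
    ultimately show ?thesis using mD intc[of "f m"] by (simp add: \<mu>_def)
  qed
qed

lemma phi_sublevel_convex:
  assumes a: "admissible_phi \<phi>"
  shows "convex {x. 0 \<le> x \<and> \<phi> x \<le> y}"
proof (cases y)
  case (real r)
  show ?thesis unfolding convex_alt
  proof (intro ballI allI impI)
    fix u v and t :: real assume u: "u \<in> {x. 0 \<le> x \<and> \<phi> x \<le> y}" and v: "v \<in> {x. 0 \<le> x \<and> \<phi> x \<le> y}"
      and t: "0 \<le> t \<and> t \<le> 1"
    have "\<phi> ((1 - t) * u + (1 - (1 - t)) * v) \<le> ereal (1 - t) * \<phi> u + ereal (1 - (1 - t)) * \<phi> v"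
      using adm_conv[OF a, of u v "1 - t"] u v t by auto
    also have "\<dots> \<le> ereal (1 - t) * y + ereal (1 - (1 - t)) * y"
      using u v t by (intro add_mono ereal_mult_left_mono) auto
    also have "\<dots> = ereal ((1 - t) * r + (1 - (1 - t)) * r)" using real by (simp only: times_ereal.simps(1) plus_ereal.simps(1))
    also have "\<dots> = y" using real by (simp add: algebra_simps)
    finally have "\<phi> ((1 - t) * u + t * v) \<le> y" by simp
    moreover have "0 \<le> (1 - t) * u + t * v" using u v t by simp
    ultimately show "(1 - t) *\<^sub>R u + t *\<^sub>R v \<in> {x. 0 \<le> x \<and> \<phi> x \<le> y}"
      by simp
  qed
next
  case PInf
  then have "{x. 0 \<le> x \<and> \<phi> x \<le> y} = {0..}" by auto
  then show ?thesis by simp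
next
  case MInf
  then have "{x. 0 \<le> x \<and> \<phi> x \<le> y} = {}" using adm_ninf[OF a] by auto
  then show ?thesis by (simp only: convex_empty)
qed

lemma phi_ext_meas:
  assumes a: "admissible_phi \<phi>"
  shows "(\<lambda>x. if 0 \<le> x then \<phi> x else 0) \<in> borel_measurable borel"
proof (rule borel_measurableI_le)
  fix y :: ereal
  have "{x \<in> space borel. (if 0 \<le> x then \<phi> x else 0) \<le> y} = {x. 0 \<le> x \<and> \<phi> x \<le> y} \<union> (if 0 \<le> y then {..<0} else {})"
    by auto
  moreover have "{x. 0 \<le> x \<and> \<phi> x \<le> y} \<in> sets borel"
    using phi_sublevel_convex[OF a] is_interval_convex_1 real_interval_borel_measurable by blast
  ultimately show "{x \<in> space borel. (if 0 \<le> x then \<phi> x else 0) \<le> y} \<in> sets borel" by auto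
qed

lemma phi_comp_meas:
  assumes a: "admissible_phi \<phi>" and Z: "Z \<in> borel_measurable M" and Z0: "\<And>x. 0 \<le> Z x"
  shows "(\<lambda>x. \<phi> (Z x)) \<in> borel_measurable M"
proof -
  have "(\<lambda>x. (\<lambda>x. if 0 \<le> x then \<phi> x else 0) (Z x)) \<in> borel_measurable M"
    using measurable_compose[OF Z phi_ext_meas[OF a]] by simp
  then show ?thesis using Z0 by simp
qed

lemma phi_affine_lower:
  assumes a: "admissible_phi \<phi>"
  shows "\<exists>\<alpha> \<beta>. \<forall>z\<in>domphi \<phi>. \<alpha> + \<beta> * z \<le> psi \<phi> z"
proof (cases "domphi \<phi> = {1}")
  case True
  then show ?thesis using psi_one[OF a] by (intro exI[of _ 0]) auto
next
  case False
  then obtain d where d: "d \<in> domphi \<phi>" "d \<noteq> 1" using one_domphi[OF a] by blast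
  define c where "c = (1 + d) / 2"
  have "\<exists>s. \<forall>z\<in>domphi \<phi>. psi \<phi> c + s * (z - c) \<le> psi \<phi> z"
  proof (cases "d < 1")
    case True
    show ?thesis by (rule subgrad[OF convex_on_psi[OF a] d(1) _ one_domphi[OF a]]) (use True in \<open>auto simp: c_def\<close>)
  next
    case False
    then have "1 < d" using d by auto
    then show ?thesis by (intro subgrad[OF convex_on_psi[OF a] one_domphi[OF a] _ d(1)]) (auto simp: c_def)
  qed
  then obtain s where "\<forall>z\<in>domphi \<phi>. psi \<phi> c + s * (z - c) \<le> psi \<phi> z" by blast
  then show ?thesis by (intro exI[of _ "psi \<phi> c - s * c"] exI[of _ s]) (auto simp: algebra_simps)
qed

lemma enn2ereal_fin: assumes "x \<noteq> \<infinity>" shows "enn2ereal x = ereal (enn2real x)"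
proof -
  have "enn2ereal x \<noteq> \<infinity>"
  proof
    assume "enn2ereal x = \<infinity>"
    then have "e2ennreal (enn2ereal x) = top" by simp
    then show False using assms by simp
  qed
  moreover have "enn2ereal x \<noteq> -\<infinity>" using enn2ereal_nonneg[of x] by auto
  ultimately have "ereal (real_of_ereal (enn2ereal x)) = enn2ereal x" by (cases "enn2ereal x") auto
  then show ?thesis by simp
qed

lemma ennreal_abs_split: "ennreal \<bar>r\<bar> = ennreal (max 0 r) + ennreal (max 0 (- r))"
  by (cases "0 \<le> r") (auto simp: max_def ennreal_neg)

lemma ball_facts:
  assumes P: "prob_space P" and a: "admissible_phi \<phi>" and Q: "Q \<in> phi_ball \<phi> P \<delta>"
  defines "Z \<equiv> \<lambda>\<omega>. enn2real (RN_deriv P Q \<omega>)"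
  shows "Z \<in> borel_measurable P" "\<And>\<omega>. 0 \<le> Z \<omega>"
    "\<And>A. A \<in> sets P \<Longrightarrow> integrable P (\<lambda>x. indicator A x * Z x)"
    "\<And>A. A \<in> sets P \<Longrightarrow> (\<integral>x. indicator A x * Z x \<partial>P) = measure Q A"
    "AE \<omega> in P. Z \<omega> \<in> domphi \<phi>"
    "integrable P (\<lambda>\<omega>. psi \<phi> (Z \<omega>))"
    "phi_div \<phi> Q P = ereal (\<integral>\<omega>. psi \<phi> (Z \<omega>) \<partial>P)"
proof -
  interpret P: prob_space P by (rule P)
  have Qp: "prob_space Q" and sQ: "sets Q = sets P" and ac: "absolutely_continuous P Q"
    and div: "phi_div \<phi> Q P \<le> ereal \<delta>" using Q unfolding phi_ball_def by auto
  interpret Qp: prob_space Q by (rule Qp)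
  have sfQ: "sigma_finite_measure Q" by (rule subprob_space_imp_sigma_finite[OF prob_space_imp_subprob_space[OF Qp]])
  have dens: "density P (RN_deriv P Q) = Q" by (rule P.density_RN_deriv[OF ac sQ])
  have fin: "AE \<omega> in P. RN_deriv P Q \<omega> \<noteq> \<infinity>" by (rule P.RN_deriv_finite[OF sfQ ac sQ])
  have AEZ: "AE \<omega> in P. RN_deriv P Q \<omega> = ennreal (Z \<omega>)"
    using fin by eventually_elim (auto simp: Z_def ennreal_enn2real_if)
  show Zm: "Z \<in> borel_measurable P" unfolding Z_def by measurable
  show Z0: "\<And>\<omega>. 0 \<le> Z \<omega>" unfolding Z_def by simp
  have nnA: "(\<integral>\<^sup>+x. ennreal (indicator A x * Z x) \<partial>P) = emeasure Q A" if A: "A \<in> sets P" for A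
  proof -
    have "emeasure Q A = emeasure (density P (RN_deriv P Q)) A" using dens by simp
    also have "\<dots> = (\<integral>\<^sup>+x. RN_deriv P Q x * indicator A x \<partial>P)"
      by (rule emeasure_density) (use A in auto)
    also have "\<dots> = (\<integral>\<^sup>+x. ennreal (indicator A x * Z x) \<partial>P)"
      using AEZ by (intro nn_integral_cong_AE) (auto elim!: eventually_mono simp: indicator_def)
    finally show ?thesis by simp
  qed
  show intA: "integrable P (\<lambda>x. indicator A x * Z x)" if A: "A \<in> sets P" for A
  proof (rule integrableI_nonneg)
    show "(\<lambda>x. indicator A x * Z x) \<in> borel_measurable P" using Zm A by measurable
    show "AE x in P. 0 \<le> indicator A x * Z x" using Z0 by auto
    show "(\<integral>\<^sup>+x. ennreal (indicator A x * Z x) \<partial>P) < \<infinity>" using nnA[OF A] Qp.emeasure_finite[of A]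
      by (simp add: less_top[symmetric])
  qed
  show intAv: "(\<integral>x. indicator A x * Z x \<partial>P) = measure Q A" if A: "A \<in> sets P" for A
  proof -
    have "ennreal (\<integral>x. indicator A x * Z x \<partial>P) = emeasure Q A"
      using nn_integral_eq_integral[OF intA[OF A]] Z0 nnA[OF A] by simp
    also have "\<dots> = ennreal (measure Q A)" by (simp add: Qp.emeasure_eq_measure)
    finally show ?thesis
      using Z0 by (subst (asm) ennreal_inj) (auto intro!: integral_nonneg_AE)
  qed
  have intZ: "integrable P Z"
  proof -
    show ?thesis using intA[OF sets.top[of P]] by (rule integrable_cong_AE_imp) (auto intro!: AE_I2 Zm)
  qed
  define F where "F = (\<lambda>\<omega>. \<phi> (Z \<omega>))"
  have Fm: "F \<in> borel_measurable P" unfolding F_def by (rule phi_comp_meas[OF a Zm Z0])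
  define Ppos where "Ppos = (\<integral>\<^sup>+\<omega>. e2ennreal (max 0 (F \<omega>)) \<partial>P)"
  define Pneg where "Pneg = (\<integral>\<^sup>+\<omega>. e2ennreal (max 0 (- F \<omega>)) \<partial>P)"
  have pd: "phi_div \<phi> Q P = enn2ereal Ppos - enn2ereal Pneg"
    unfolding phi_div_def Ppos_def Pneg_def F_def Z_def ..
  obtain \<alpha> \<beta> where ab: "\<And>z. z \<in> domphi \<phi> \<Longrightarrow> \<alpha> + \<beta> * z \<le> psi \<phi> z"
    using phi_affine_lower[OF a] by blast
  have "Pneg \<le> (\<integral>\<^sup>+\<omega>. ennreal (\<bar>\<alpha>\<bar> + \<bar>\<beta>\<bar> * Z \<omega>) \<partial>P)"
    unfolding Pneg_def
  proof (rule nn_integral_mono)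
    fix \<omega>
    show "e2ennreal (max 0 (- F \<omega>)) \<le> ennreal (\<bar>\<alpha>\<bar> + \<bar>\<beta>\<bar> * Z \<omega>)"
    proof (cases "F \<omega> = \<infinity>")
      case True then show ?thesis by simp
    next
      case False
      then have zd: "Z \<omega> \<in> domphi \<phi>" using Z0 unfolding domphi_def F_def by auto
      have Fe: "F \<omega> = ereal (psi \<phi> (Z \<omega>))" using domphi_eq[OF a zd] by (simp add: F_def)
      have "\<alpha> + \<beta> * Z \<omega> \<le> psi \<phi> (Z \<omega>)" by (rule ab[OF zd])
      moreover have "\<bar>\<beta> * Z \<omega>\<bar> \<le> \<bar>\<beta>\<bar> * Z \<omega>" using Z0[of \<omega>] by (simp add: abs_mult)
      ultimately have "max 0 (- psi \<phi> (Z \<omega>)) \<le> \<bar>\<alpha>\<bar> + \<bar>\<beta>\<bar> * Z \<omega>" by (smt (verit) Z0 abs_ge_zero mult_nonneg_nonneg)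
      then have "ennreal (max 0 (- psi \<phi> (Z \<omega>))) \<le> ennreal (\<bar>\<alpha>\<bar> + \<bar>\<beta>\<bar> * Z \<omega>)" by (rule ennreal_leI)
      moreover have "e2ennreal (max 0 (- F \<omega>)) = ennreal (max 0 (- psi \<phi> (Z \<omega>)))"
        unfolding Fe by (cases "0 \<le> - psi \<phi> (Z \<omega>)") (auto simp: max_def ennreal_neg)
      ultimately show ?thesis by simp
    qed
  qed
  also have "\<dots> < \<infinity>"
  proof -
    have "integrable P (\<lambda>\<omega>. \<bar>\<alpha>\<bar> + \<bar>\<beta>\<bar> * Z \<omega>)" using intZ by auto
    then show ?thesis using nn_integral_eq_integral[of P "\<lambda>\<omega>. \<bar>\<alpha>\<bar> + \<bar>\<beta>\<bar> * Z \<omega>"] Z0 by simp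
  qed
  finally have Pneg_fin: "Pneg < \<infinity>" .
  have Ppos_fin: "Ppos < \<infinity>"
  proof (rule ccontr)
    assume "\<not> Ppos < \<infinity>"
    then have "Ppos = \<infinity>" by (simp add: less_top[symmetric])
    then have "phi_div \<phi> Q P = \<infinity>" using pd Pneg_fin enn2ereal_fin[of Pneg] by simp
    then show False using div by simp
  qed
  have "AE \<omega> in P. e2ennreal (max 0 (F \<omega>)) \<noteq> \<infinity>"
    by (rule nn_integral_PInf_AE) (use Fm Ppos_fin in \<open>auto simp: Ppos_def\<close>)
  then have AEF: "AE \<omega> in P. F \<omega> \<noteq> \<infinity>" by eventually_elim auto
  show AED: "AE \<omega> in P. Z \<omega> \<in> domphi \<phi>"
    using AEF by eventually_elim (use Z0 in \<open>auto simp: F_def domphi_def\<close>)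
  have AEFe: "AE \<omega> in P. F \<omega> = ereal (psi \<phi> (Z \<omega>))"
    using AED by eventually_elim (simp add: F_def domphi_eq[OF a])
  have psim: "(\<lambda>\<omega>. psi \<phi> (Z \<omega>)) \<in> borel_measurable P"
    using Fm unfolding psi_def F_def by measurable
  have nnpos: "(\<integral>\<^sup>+\<omega>. ennreal (psi \<phi> (Z \<omega>)) \<partial>P) = Ppos"
    unfolding Ppos_def using AEFe by (intro nn_integral_cong_AE) (auto elim!: eventually_mono simp: max_def ennreal_neg)
  have nnneg: "(\<integral>\<^sup>+\<omega>. ennreal (- psi \<phi> (Z \<omega>)) \<partial>P) = Pneg"
    unfolding Pneg_def using AEFe by (intro nn_integral_cong_AE) (auto elim!: eventually_mono simp: max_def ennreal_neg)
  show intpsi: "integrable P (\<lambda>\<omega>. psi \<phi> (Z \<omega>))"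
  proof (rule integrableI_bounded[OF psim])
    have "(\<integral>\<^sup>+\<omega>. ennreal (norm (psi \<phi> (Z \<omega>))) \<partial>P)
        = (\<integral>\<^sup>+\<omega>. ennreal (max 0 (psi \<phi> (Z \<omega>))) + ennreal (max 0 (- psi \<phi> (Z \<omega>))) \<partial>P)"
      by (simp add: ennreal_abs_split)
    also have "\<dots> = (\<integral>\<^sup>+\<omega>. ennreal (max 0 (psi \<phi> (Z \<omega>))) \<partial>P) + (\<integral>\<^sup>+\<omega>. ennreal (max 0 (- psi \<phi> (Z \<omega>))) \<partial>P)"
      using psim by (intro nn_integral_add) auto
    also have "\<dots> = Ppos + Pneg"
    proof -
      have em: "\<And>r::real. ennreal (max 0 r) = ennreal r" by (auto simp: max_def ennreal_neg)
      show ?thesis unfolding em using nnpos nnneg by simp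
    qed
    finally show "(\<integral>\<^sup>+\<omega>. ennreal (norm (psi \<phi> (Z \<omega>))) \<partial>P) < \<infinity>"
      using Ppos_fin Pneg_fin by (simp add: ennreal_add_less_top less_top)
  qed
  show "phi_div \<phi> Q P = ereal (\<integral>\<omega>. psi \<phi> (Z \<omega>) \<partial>P)"
    unfolding pd real_lebesgue_integral_def[OF intpsi] nnpos nnneg
    using Ppos_fin Pneg_fin by (simp add: enn2ereal_fin)
qed

definition Fb :: "(real \<Rightarrow> ereal) \<Rightarrow> real \<Rightarrow> real \<Rightarrow> real" where
  "Fb \<phi> x t = x * psi \<phi> (t / x) + (1 - x) * psi \<phi> ((1 - t) / (1 - x))"

definition Gs :: "(real \<Rightarrow> ereal) \<Rightarrow> real \<Rightarrow> real \<Rightarrow> real set" where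
  "Gs \<phi> \<delta> x = {t \<in> {x..1}. ereal x * \<phi> (t / x) + ereal (1 - x) * \<phi> ((1 - t) / (1 - x)) \<le> ereal \<delta>}"

lemma g_phi_Gs: "0 < x \<Longrightarrow> x < 1 \<Longrightarrow> g_phi \<phi> \<delta> x = Sup (Gs \<phi> \<delta> x)"
  unfolding g_phi_def Gs_def by auto

lemma Gs_iff:
  assumes a: "admissible_phi \<phi>" and x: "0 < x" "x < 1" and t: "x \<le> t" "t \<le> 1"
  shows "t \<in> Gs \<phi> \<delta> x \<longleftrightarrow> t / x \<in> domphi \<phi> \<and> (1 - t) / (1 - x) \<in> domphi \<phi> \<and> Fb \<phi> x t \<le> \<delta>"
proof -
  have n1: "0 \<le> t / x" "0 \<le> (1 - t) / (1 - x)" using x t by auto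
  show ?thesis
  proof (cases "t / x \<in> domphi \<phi> \<and> (1 - t) / (1 - x) \<in> domphi \<phi>")
    case True
    then show ?thesis using t unfolding Gs_def Fb_def by (simp add: domphi_eq[OF a])
  next
    case False
    have ni: "\<phi> (t / x) \<noteq> -\<infinity>" "\<phi> ((1 - t) / (1 - x)) \<noteq> -\<infinity>" using adm_ninf[OF a] n1 by auto
    from False have "\<phi> (t / x) = \<infinity> \<or> \<phi> ((1 - t) / (1 - x)) = \<infinity>" using n1 unfolding domphi_def by auto
    then have "ereal x * \<phi> (t / x) + ereal (1 - x) * \<phi> ((1 - t) / (1 - x)) = \<infinity>"
      using x ni by (auto simp: ereal_mult_infty)
    then show ?thesis using False unfolding Gs_def by auto
  qed
qed

lemma Fb_self: "admissible_phi \<phi> \<Longrightarrow> 0 < x \<Longrightarrow> x < 1 \<Longrightarrow> Fb \<phi> x x = 0"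
  unfolding Fb_def using psi_one[of \<phi>] by simp

lemma self_Gs: assumes a: "admissible_phi \<phi>" and x: "0 < x" "x < 1" and d: "0 \<le> \<delta>"
  shows "x \<in> Gs \<phi> \<delta> x"
  using Gs_iff[OF a x, of x \<delta>] x d Fb_self[OF a x] one_domphi[OF a] by simp

lemma Gs_bdd: "bdd_above (Gs \<phi> \<delta> x)"
  unfolding Gs_def by (rule bdd_aboveI[of _ 1]) auto

lemma g_phi_bounds:
  assumes a: "admissible_phi \<phi>" and d: "0 \<le> \<delta>" and x: "0 \<le> x" "x \<le> 1"
  shows "x \<le> g_phi \<phi> \<delta> x" "g_phi \<phi> \<delta> x \<le> 1"
proof -
  have "x \<le> g_phi \<phi> \<delta> x \<and> g_phi \<phi> \<delta> x \<le> 1"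
  proof (cases "x = 0 \<or> x = 1")
    case True then show ?thesis by (auto simp: g_phi_def)
  next
    case False
    then have x': "0 < x" "x < 1" using x by auto
    have mem: "x \<in> Gs \<phi> \<delta> x" by (rule self_Gs[OF a x' d])
    have "x \<le> Sup (Gs \<phi> \<delta> x)" by (rule cSup_upper[OF mem Gs_bdd])
    moreover have "Sup (Gs \<phi> \<delta> x) \<le> 1" by (rule cSup_least) (use mem in \<open>auto simp: Gs_def\<close>)
    ultimately show ?thesis using g_phi_Gs[OF x'] by simp
  qed
  then show "x \<le> g_phi \<phi> \<delta> x" "g_phi \<phi> \<delta> x \<le> 1" by auto
qed

lemma Gs_upper: "0 < x \<Longrightarrow> x < 1 \<Longrightarrow> t \<in> Gs \<phi> \<delta> x \<Longrightarrow> t \<le> g_phi \<phi> \<delta> x"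
  using g_phi_Gs cSup_upper[OF _ Gs_bdd] by metis

lemma Gs_shift:
  assumes a: "admissible_phi \<phi>" and d: "0 \<le> \<delta>" and xy: "0 < x" "x < y" "y \<le> t" "y < 1"
    and t: "t \<in> Gs \<phi> \<delta> x"
  shows "t \<in> Gs \<phi> \<delta> y"
proof -
  have x1: "x < 1" using xy by simp
  have t1: "t \<le> 1" "x \<le> t" using t unfolding Gs_def by auto
  from Gs_iff[OF a xy(1) x1 t1(2) t1(1)] t
  have D1: "t / x \<in> domphi \<phi>" and D2: "(1 - t) / (1 - x) \<in> domphi \<phi>" and F: "Fb \<phi> x t \<le> \<delta>" by auto
  define l where "l = (t - y) / (t - x)"
  have tx: "0 < t - x" using xy by simp
  have l: "0 \<le> l" "l < 1" using xy tx by (auto simp: l_def divide_simps)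
  have yl: "y = l * x + (1 - l) * t"
  proof -
    have "1 - l = (y - x) / (t - x)" using tx by (simp add: l_def field_simps)
    then have "l * x + (1 - l) * t = ((t - y) * x + (y - x) * t) / (t - x)"
      using tx by (simp add: l_def add_divide_distrib)
    also have "(t - y) * x + (y - x) * t = y * (t - x)" by (simp add: algebra_simps)
    finally show ?thesis using tx by simp
  qed
  define w1 where "w1 = l * x / y"
  define w2 where "w2 = l * (1 - x) / (1 - y)"
  have y0: "0 < y" using xy by simp
  have y1: "0 < 1 - y" using xy by simp
  have ym: "1 - y = l * (1 - x) + (1 - l) * (1 - t)" using yl by (simp add: algebra_simps)
  have w1: "0 \<le> w1" "w1 \<le> 1"
  proof -
    show "0 \<le> w1" unfolding w1_def using l xy by simp
    have "l * x \<le> y" using yl l t1 xy by (smt (verit) mult_nonneg_nonneg)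
    then show "w1 \<le> 1" unfolding w1_def using y0 by simp
  qed
  have w2: "0 \<le> w2" "w2 \<le> 1"
  proof -
    show "0 \<le> w2" unfolding w2_def using l xy x1 by simp
    have "l * (1 - x) \<le> 1 - y" using ym l t1 by (smt (verit) mult_nonneg_nonneg)
    then show "w2 \<le> 1" unfolding w2_def using y1 by simp
  qed
  have e1: "t / y = w1 * (t / x) + (1 - w1) * 1"
  proof -
    have "w1 * (t / x) + (1 - w1) * 1 = (l * t + (y - l * x)) / y"
      unfolding w1_def using y0 xy(1) by (simp add: field_simps)
    also have "l * t + (y - l * x) = t" using yl by (simp add: algebra_simps)
    finally show ?thesis by simp
  qed
  have e2: "(1 - t) / (1 - y) = w2 * ((1 - t) / (1 - x)) + (1 - w2) * 1"
  proof -
    have "w2 * ((1 - t) / (1 - x)) + (1 - w2) * 1 = (l * (1 - t) + ((1 - y) - l * (1 - x))) / (1 - y)"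
    proof -
      have n: "1 - x \<noteq> 0" "1 - y \<noteq> 0" using x1 y1 by auto
      have "w2 * ((1 - t) / (1 - x)) = (l * (1 - t)) * (1 - x) / ((1 - y) * (1 - x))" unfolding w2_def by (simp add: ac_simps)
      also have "\<dots> = l * (1 - t) / (1 - y)" using n by simp
      moreover have "1 - w2 = ((1 - y) - l * (1 - x)) / (1 - y)" unfolding w2_def using n by (simp add: field_simps)
      ultimately show ?thesis by (simp add: add_divide_distrib)
    qed
    also have "l * (1 - t) + ((1 - y) - l * (1 - x)) = 1 - t" using ym by (simp add: algebra_simps)
    finally show ?thesis by simp
  qed
  have c1: "t / y \<in> domphi \<phi>" "psi \<phi> (t / y) \<le> w1 * psi \<phi> (t / x) + (1 - w1) * psi \<phi> 1"
    using domphi_conv[OF a D1 one_domphi[OF a] w1] e1 by auto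
  have c2: "(1 - t) / (1 - y) \<in> domphi \<phi>" "psi \<phi> ((1 - t) / (1 - y)) \<le> w2 * psi \<phi> ((1 - t) / (1 - x)) + (1 - w2) * psi \<phi> 1"
    using domphi_conv[OF a D2 one_domphi[OF a] w2] e2 by auto
  have "y * psi \<phi> (t / y) \<le> y * (w1 * psi \<phi> (t / x))"
    using mult_left_mono[OF c1(2), of y] y0 psi_one[OF a] by simp
  also have "y * (w1 * psi \<phi> (t / x)) = l * (x * psi \<phi> (t / x))" unfolding w1_def using y0 by simp
  finally have i1: "y * psi \<phi> (t / y) \<le> l * (x * psi \<phi> (t / x))" .
  have "(1 - y) * psi \<phi> ((1 - t) / (1 - y)) \<le> (1 - y) * (w2 * psi \<phi> ((1 - t) / (1 - x)))"
    using mult_left_mono[OF c2(2), of "1 - y"] y1 psi_one[OF a] by simp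
  also have "(1 - y) * (w2 * psi \<phi> ((1 - t) / (1 - x))) = l * ((1 - x) * psi \<phi> ((1 - t) / (1 - x)))"
    unfolding w2_def using y1 by simp
  finally have i2: "(1 - y) * psi \<phi> ((1 - t) / (1 - y)) \<le> l * ((1 - x) * psi \<phi> ((1 - t) / (1 - x)))" .
  from i1 i2 have "Fb \<phi> y t \<le> l * Fb \<phi> x t" unfolding Fb_def by (simp add: algebra_simps)
  also have "\<dots> \<le> l * \<delta>" using F l by (simp add: mult_left_mono)
  also have "\<dots> \<le> \<delta>" using l d by (simp add: mult_left_le_one_le)
  finally have "Fb \<phi> y t \<le> \<delta>" .
  then show ?thesis using Gs_iff[OF a y0 xy(4) xy(3) t1(1)] c1(1) c2(1) by simp
qed

lemma g_phi_mono:
  assumes a: "admissible_phi \<phi>" and d: "0 \<le> \<delta>"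
  shows "mono_on {0..1} (g_phi \<phi> \<delta>)"
proof (rule mono_onI)
  fix x y :: real assume x: "x \<in> {0..1}" and y: "y \<in> {0..1}" and xy: "x \<le> y"
  show "g_phi \<phi> \<delta> x \<le> g_phi \<phi> \<delta> y"
  proof (cases "x = 0 \<or> y = 1 \<or> x = y")
    case True
    have g0: "g_phi \<phi> \<delta> 0 = 0" and g1: "g_phi \<phi> \<delta> 1 = 1" by (auto simp: g_phi_def)
    show ?thesis using True
    proof (elim disjE)
      assume "x = 0" then show ?thesis using g0 g_phi_bounds(1)[OF a d, of y] y by auto
    next
      assume "y = 1" then show ?thesis using g1 g_phi_bounds(2)[OF a d, of x] x by auto
    qed simp
  next
    case False
    then have x': "0 < x" "x < 1" "x < y" "y < 1" using x y xy by auto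
    have "Sup (Gs \<phi> \<delta> x) \<le> g_phi \<phi> \<delta> y"
    proof (rule cSup_least)
      show "Gs \<phi> \<delta> x \<noteq> {}" using self_Gs[OF a x'(1,2) d] by auto
      fix t assume t: "t \<in> Gs \<phi> \<delta> x"
      show "t \<le> g_phi \<phi> \<delta> y"
      proof (cases "t \<le> y")
        case True then show ?thesis using g_phi_bounds(1)[OF a d, of y] y by auto
      next
        case False
        then have "t \<in> Gs \<phi> \<delta> y" using Gs_shift[OF a d x'(1,3) _ x'(4) t] by auto
        then show ?thesis using Gs_upper x' by auto
      qed
    qed
    then show ?thesis using g_phi_Gs[OF x'(1,2)] by simp
  qed
qed

lemma key_ineq:
  assumes P: "prob_space P" and a: "admissible_phi \<phi>" and Q: "Q \<in> phi_ball \<phi> P \<delta>" and d: "0 \<le> \<delta>"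
    and A: "A \<in> sets P"
  shows "measure Q A \<le> g_phi \<phi> \<delta> (measure P A)"
proof -
  interpret P: prob_space P by (rule P)
  have Qp: "prob_space Q" and sQ: "sets Q = sets P" and ac: "absolutely_continuous P Q"
    using Q unfolding phi_ball_def by auto
  interpret Qp: prob_space Q by (rule Qp)
  define p where "p = measure P A"
  define q where "q = measure Q A"
  have p01: "0 \<le> p" "p \<le> 1" unfolding p_def by auto
  have q1: "q \<le> 1" unfolding q_def by simp
  show ?thesis
  proof (cases "p = 0")
    case True
    then have "A \<in> null_sets P" using A unfolding p_def by (simp add: P.emeasure_eq_measure null_sets_def)
    then have "A \<in> null_sets Q" using ac unfolding absolutely_continuous_def by auto
    then have "q = 0" unfolding q_def by (simp add: Qp.emeasure_eq_measure null_sets_def)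
    then show ?thesis using True by (simp add: p_def q_def g_phi_def)
  next
    case p0: False
    show ?thesis
    proof (cases "p = 1")
      case True then show ?thesis using q1 by (simp add: p_def q_def g_phi_def)
    next
      case p1: False
      have p': "0 < p" "p < 1" using p0 p1 p01 by auto
      show ?thesis
      proof (cases "q \<le> p")
        case True then show ?thesis using g_phi_bounds(1)[OF a d p01] by (simp add: p_def q_def)
      next
        case False
        then have qp: "p \<le> q" by simp
        define Z where "Z = (\<lambda>\<omega>. enn2real (RN_deriv P Q \<omega>))"
        have Zd: "\<And>\<omega>. enn2real (RN_deriv P Q \<omega>) = Z \<omega>" by (simp add: Z_def)
        have Zd': "(\<lambda>\<omega>. enn2real (RN_deriv P Q \<omega>)) = Z" by (simp add: Z_def)
        note bf = ball_facts[OF P a Q, unfolded Zd Zd']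
        have bd: "ereal (\<integral>\<omega>. psi \<phi> (Z \<omega>) \<partial>P) \<le> ereal \<delta>"
          using bf(7) Q unfolding phi_ball_def Z_def by auto
        define Ac where "Ac = space P - A"
        have Ac: "Ac \<in> sets P" unfolding Ac_def using A by auto
        have pAc: "measure P Ac = 1 - p" unfolding Ac_def p_def using P.prob_compl[OF A] by simp
        have qAc: "measure Q Ac = 1 - q" unfolding Ac_def q_def 
        proof -
          have AQ: "A \<in> sets Q" by (subst sQ) (rule A)
          have "space Q = space P" by (rule sets_eq_imp_space_eq[OF sQ])
          then show "measure Q (space P - A) = 1 - measure Q A" using Qp.prob_compl[OF AQ] by simp
        qed
        have ipsi: "integrable P (\<lambda>x. indicator B x * psi \<phi> (Z x))" if "B \<in> sets P" for B
          using integrable_mult_indicator[OF that bf(6)] by (simp add: Z_def)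
        have J: "(\<integral>x. indicator B x * Z x \<partial>P) / measure P B \<in> domphi \<phi> \<and>
            measure P B * psi \<phi> ((\<integral>x. indicator B x * Z x \<partial>P) / measure P B) \<le> (\<integral>x. indicator B x * psi \<phi> (Z x) \<partial>P)"
          if B: "B \<in> sets P" "0 < measure P B" for B
        proof (rule jensen_set[OF convex_on_psi[OF a] B(1)])
          show "emeasure P B < \<infinity>" using P.emeasure_finite[of B] by (simp add: less_top[symmetric])
          show "0 < measure P B" by (rule B(2))
          show "integrable P (\<lambda>x. indicator B x * Z x)" by (rule bf(3)[OF B(1)])
          show "integrable P (\<lambda>x. indicator B x * psi \<phi> (Z x))" by (rule ipsi[OF B(1)])
          show "AE x in P. x \<in> B \<longrightarrow> Z x \<in> domphi \<phi>" using bf(5) by auto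
        qed
        have J1: "q / p \<in> domphi \<phi>" "p * psi \<phi> (q / p) \<le> (\<integral>x. indicator A x * psi \<phi> (Z x) \<partial>P)"
        proof -
          have m1: "(\<integral>x. indicator A x * Z x \<partial>P) / p = q / p" using bf(4)[OF A] by (simp only: p_def q_def)
          have "0 < measure P A" using p' by (simp add: p_def)
          from J[OF A this, unfolded p_def[symmetric], unfolded m1] show "q / p \<in> domphi \<phi>" "p * psi \<phi> (q / p) \<le> (\<integral>x. indicator A x * psi \<phi> (Z x) \<partial>P)"
            by auto
        qed
        have J2: "(1 - q) / (1 - p) \<in> domphi \<phi>" "(1 - p) * psi \<phi> ((1 - q) / (1 - p)) \<le> (\<integral>x. indicator Ac x * psi \<phi> (Z x) \<partial>P)"
        proof -
          have m1: "(\<integral>x. indicator Ac x * Z x \<partial>P) / (1 - p) = (1 - q) / (1 - p)" using bf(4)[OF Ac] by (simp only: qAc)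
          have "0 < measure P Ac" using p' by (simp add: pAc)
          from J[OF Ac this, unfolded pAc, unfolded m1] show "(1 - q) / (1 - p) \<in> domphi \<phi>" "(1 - p) * psi \<phi> ((1 - q) / (1 - p)) \<le> (\<integral>x. indicator Ac x * psi \<phi> (Z x) \<partial>P)"
            by auto
        qed
        have "(\<integral>x. indicator A x * psi \<phi> (Z x) \<partial>P) + (\<integral>x. indicator Ac x * psi \<phi> (Z x) \<partial>P)
            = (\<integral>x. indicator A x * psi \<phi> (Z x) + indicator Ac x * psi \<phi> (Z x) \<partial>P)"
          by (rule Bochner_Integration.integral_add[symmetric]) (use ipsi A Ac in auto)
        also have "\<dots> = (\<integral>x. psi \<phi> (Z x) \<partial>P)"
          by (rule Bochner_Integration.integral_cong) (auto simp: Ac_def indicator_def)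
        finally have sum: "(\<integral>x. indicator A x * psi \<phi> (Z x) \<partial>P) + (\<integral>x. indicator Ac x * psi \<phi> (Z x) \<partial>P) = (\<integral>x. psi \<phi> (Z x) \<partial>P)" .
        have "Fb \<phi> p q \<le> \<delta>" unfolding Fb_def using J1(2) J2(2) sum bd by simp
        then have "q \<in> Gs \<phi> \<delta> p" using Gs_iff[OF a p' qp q1] J1(1) J2(1) by simp
        then show ?thesis using Gs_upper[OF p'] by (simp add: p_def q_def)
      qed
    qed
  qed
qed

lemma surv_antimono:
  fixes X :: "'a \<Rightarrow> real"
  assumes Q: "prob_space Q" and X: "X \<in> borel_measurable Q" and xy: "x \<le> y"
  shows "measure Q {\<omega> \<in> space Q. X \<omega> > y} \<le> measure Q {\<omega> \<in> space Q. X \<omega> > x}"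
proof -
  interpret Q: prob_space Q by (rule Q)
  have ev: "{\<omega> \<in> space Q. x < X \<omega>} \<in> sets Q" using X by measurable
  show ?thesis using xy by (intro Q.finite_measure_mono ev) (auto intro: less_le_trans)
qed

lemma dr_integrable:
  fixes X :: "'a \<Rightarrow> real" and h :: "real \<Rightarrow> real"
  assumes Q: "prob_space Q" and X: "X \<in> borel_measurable Q" and B: "\<forall>\<omega>\<in>space Q. \<bar>X \<omega>\<bar> \<le> B"
    and h: "mono_on {0..1} h" "h ` {0..1} \<subseteq> {0..1}" "h 0 = 0" "h 1 = 1"
  shows "set_integrable lborel {0..} (\<lambda>x. h (measure Q {\<omega> \<in> space Q. X \<omega> > x}))"
    and "set_integrable lborel {..0} (\<lambda>x. h (measure Q {\<omega> \<in> space Q. X \<omega> > x}) - 1)"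
    and "(\<lambda>x. h (measure Q {\<omega> \<in> space Q. X \<omega> > x})) \<in> borel_measurable borel"
proof -
  interpret Q: prob_space Q by (rule Q)
  define S where "S = (\<lambda>x. measure Q {\<omega> \<in> space Q. X \<omega> > x})"
  have Sd: "\<And>x. measure Q {\<omega> \<in> space Q. X \<omega> > x} = S x" by (simp add: S_def)
  have S01: "S x \<in> {0..1}" for x unfolding S_def by simp
  have Smono: "x \<le> y \<Longrightarrow> S y \<le> S x" for x y unfolding S_def by (rule surv_antimono[OF Q X])
  have "mono (\<lambda>x. - h (S x))"
  proof (rule monoI)
    fix x y :: real assume "x \<le> y"
    then have "h (S y) \<le> h (S x)" using h(1) S01 Smono by (auto intro: mono_onD)
    then show "- h (S x) \<le> - h (S y)" by simp
  qed
  then have "(\<lambda>x. - h (S x)) \<in> borel_measurable borel" by (rule borel_measurable_mono)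
  then have "(\<lambda>x. - (- h (S x))) \<in> borel_measurable borel" by measurable
  then have hm: "(\<lambda>x. h (S x)) \<in> borel_measurable (borel :: real measure)" by simp
  then show "(\<lambda>x. h (measure Q {\<omega> \<in> space Q. X \<omega> > x})) \<in> borel_measurable borel" by (simp add: S_def)
  define C where "C = \<bar>B\<bar>"
  have S0: "S x = 0" if "C \<le> x" for x
  proof -
    have e: "{\<omega> \<in> space Q. X \<omega> > x} = {}" using B that by (force simp: C_def)
    show ?thesis unfolding S_def e by simp
  qed
  have S1: "S x = 1" if "x < - C" for x
  proof -
    have e: "{\<omega> \<in> space Q. X \<omega> > x} = space Q" using B that by (force simp: C_def)
    show ?thesis unfolding S_def e by (simp add: Q.prob_space)
  qed
  have hb: "\<bar>h (S x)\<bar> \<le> 1" for x using h(2) S01[of x] by force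
  have hb2: "\<bar>h (S x) - 1\<bar> \<le> 1" for x using h(2) S01[of x] by force
  have Ci: "integrable lborel (indicator {-C..C} :: real \<Rightarrow> real)" by (rule integrable_real_indicator) (auto simp: emeasure_lborel_Icc_eq)
  show "set_integrable lborel {0..} (\<lambda>x. h (measure Q {\<omega> \<in> space Q. X \<omega> > x}))"
    unfolding set_integrable_def Sd
  proof (rule Bochner_Integration.integrable_bound[OF Ci])
    show "(\<lambda>x. indicator {0..} x *\<^sub>R h (S x)) \<in> borel_measurable lborel" using hm by measurable
    show "AE x in lborel. norm (indicator {0..} x *\<^sub>R h (S x)) \<le> norm (indicator {-C..C} x :: real)"
    proof (rule AE_I2)
      fix x :: real
      show "norm (indicator {0..} x *\<^sub>R h (S x)) \<le> norm (indicator {-C..C} x :: real)"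
        using hb[of x] S0[of x] h(3) by (cases "0 \<le> x"; cases "C \<le> x") (auto simp: indicator_def C_def)
    qed
  qed
  show "set_integrable lborel {..0} (\<lambda>x. h (measure Q {\<omega> \<in> space Q. X \<omega> > x}) - 1)"
    unfolding set_integrable_def Sd
  proof (rule Bochner_Integration.integrable_bound[OF Ci])
    show "(\<lambda>x. indicator {..0} x *\<^sub>R (h (S x) - 1)) \<in> borel_measurable lborel" using hm by measurable
    show "AE x in lborel. norm (indicator {..0} x *\<^sub>R (h (S x) - 1)) \<le> norm (indicator {-C..C} x :: real)"
    proof (rule AE_I2)
      fix x :: real
      show "norm (indicator {..0} x *\<^sub>R (h (S x) - 1)) \<le> norm (indicator {-C..C} x :: real)"
        using hb2[of x] S1[of x] h(4) by (cases "x \<le> 0"; cases "x < - C") (auto simp: indicator_def C_def)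
    qed
  qed
qed

lemma dr_mono:
  fixes X :: "'a \<Rightarrow> real" and h1 h2 :: "real \<Rightarrow> real"
  assumes Q: "prob_space Q" and P: "prob_space P" and sQ: "sets Q = sets P"
    and X: "X \<in> borel_measurable P" and B: "\<forall>\<omega>\<in>space P. \<bar>X \<omega>\<bar> \<le> B"
    and h1: "mono_on {0..1} h1" "h1 ` {0..1} \<subseteq> {0..1}" "h1 0 = 0" "h1 1 = 1"
    and h2: "mono_on {0..1} h2" "h2 ` {0..1} \<subseteq> {0..1}" "h2 0 = 0" "h2 1 = 1"
    and le: "\<And>x. h1 (measure Q {\<omega> \<in> space Q. X \<omega> > x}) \<le> h2 (measure P {\<omega> \<in> space P. X \<omega> > x})"
  shows "distortion_risk h1 Q X \<le> distortion_risk h2 P X"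
proof -
  have sp: "space Q = space P" by (rule sets_eq_imp_space_eq[OF sQ])
  have XQ: "X \<in> borel_measurable Q" using X measurable_cong_sets[OF sQ refl] by blast
  have BQ: "\<forall>\<omega>\<in>space Q. \<bar>X \<omega>\<bar> \<le> B" using B sp by simp
  note i1 = dr_integrable[OF Q XQ BQ h1]
  note i2 = dr_integrable[OF P X B h2]
  have "(LINT x:{0..}|lborel. h1 (measure Q {\<omega> \<in> space Q. X \<omega> > x})) \<le> (LINT x:{0..}|lborel. h2 (measure P {\<omega> \<in> space P. X \<omega> > x}))"
    by (rule set_integral_mono[OF i1(1) i2(1) le])
  moreover have "(LINT x:{..0}|lborel. h1 (measure Q {\<omega> \<in> space Q. X \<omega> > x}) - 1) \<le> (LINT x:{..0}|lborel. h2 (measure P {\<omega> \<in> space P. X \<omega> > x}) - 1)"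
    by (rule set_integral_mono[OF i1(2) i2(2)]) (use le in auto)
  ultimately show ?thesis unfolding distortion_risk_def by simp
qed

lemma P_in_ball:
  assumes P: "prob_space P" and a: "admissible_phi \<phi>" and d: "0 \<le> \<delta>"
  shows "P \<in> phi_ball \<phi> P \<delta>"
proof -
  interpret P: prob_space P by (rule P)
  have "AE x in P. (\<lambda>_. 1) x = RN_deriv P P x"
    by (rule P.RN_deriv_unique) (auto simp: density_1)
  then have AE1: "AE x in P. RN_deriv P P x = 1" by auto
  have z1: "(\<integral>\<^sup>+\<omega>. e2ennreal (max 0 (\<phi> (enn2real (RN_deriv P P \<omega>)))) \<partial>P) = 0"
    using AE1 by (subst nn_integral_cong_AE[where v="\<lambda>_. 0"]) (auto elim!: eventually_mono simp: adm_one[OF a])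
  have z2: "(\<integral>\<^sup>+\<omega>. e2ennreal (max 0 (- \<phi> (enn2real (RN_deriv P P \<omega>)))) \<partial>P) = 0"
    using AE1 by (subst nn_integral_cong_AE[where v="\<lambda>_. 0"]) (auto elim!: eventually_mono simp: adm_one[OF a])
  have "phi_div \<phi> P P = 0" unfolding phi_div_def z1 z2 by simp
  moreover have "absolutely_continuous P P" unfolding absolutely_continuous_def by simp
  ultimately show ?thesis unfolding phi_ball_def using P d by auto
qed

lemma comp_dist:
  assumes g: "distortion_fun g" and a: "admissible_phi \<phi>" and d: "0 \<le> \<delta>"
  shows "mono_on {0..1} (g \<circ> g_phi \<phi> \<delta>)" "(g \<circ> g_phi \<phi> \<delta>) ` {0..1} \<subseteq> {0..1}"
    "(g \<circ> g_phi \<phi> \<delta>) 0 = 0" "(g \<circ> g_phi \<phi> \<delta>) 1 = 1"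
proof -
  have gm: "mono_on {0..1} g" and gi: "g ` {0..1} \<subseteq> {0..1}" and g0: "g 0 = 0" and g1: "g 1 = 1"
    using g unfolding distortion_fun_def by auto
  have r: "g_phi \<phi> \<delta> x \<in> {0..1}" if "x \<in> {0..1}" for x
    using g_phi_bounds[OF a d, of x] that by auto
  show "mono_on {0..1} (g \<circ> g_phi \<phi> \<delta>)"
  proof (rule mono_onI)
    fix x y :: real assume xy: "x \<in> {0..1}" "y \<in> {0..1}" "x \<le> y"
    have "g_phi \<phi> \<delta> x \<le> g_phi \<phi> \<delta> y" using mono_onD[OF g_phi_mono[OF a d] xy] .
    then show "(g \<circ> g_phi \<phi> \<delta>) x \<le> (g \<circ> g_phi \<phi> \<delta>) y" using mono_onD[OF gm r[OF xy(1)] r[OF xy(2)]] by simp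
  qed
  show "(g \<circ> g_phi \<phi> \<delta>) ` {0..1} \<subseteq> {0..1}" using gi r by auto
  show "(g \<circ> g_phi \<phi> \<delta>) 0 = 0" "(g \<circ> g_phi \<phi> \<delta>) 1 = 1" using g0 g1 by (auto simp: g_phi_def)
qed

lemma part1:
  fixes X :: "'a \<Rightarrow> real"
  assumes P: "prob_space P" and g: "distortion_fun g" and d: "0 \<le> \<delta>" and a: "admissible_phi \<phi>"
    and X: "X \<in> borel_measurable P" and B: "\<forall>\<omega>\<in>space P. \<bar>X \<omega>\<bar> \<le> B"
  shows "(SUP Q \<in> phi_ball \<phi> P \<delta>. distortion_risk g Q X) \<le> distortion_risk (g \<circ> g_phi \<phi> \<delta>) P X"
    and "distortion_risk g P X \<le> (SUP Q \<in> phi_ball \<phi> P \<delta>. distortion_risk g Q X)"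
proof -
  have gm: "mono_on {0..1} g" and gi: "g ` {0..1} \<subseteq> {0..1}" and g0: "g 0 = 0" and g1: "g 1 = 1"
    using g unfolding distortion_fun_def by auto
  note h2 = comp_dist[OF g a d]
  have each: "distortion_risk g Q X \<le> distortion_risk (g \<circ> g_phi \<phi> \<delta>) P X" if Q: "Q \<in> phi_ball \<phi> P \<delta>" for Q
  proof -
    have Qp: "prob_space Q" and sQ: "sets Q = sets P" using Q unfolding phi_ball_def by auto
    interpret Qp: prob_space Q by (rule Qp)
    have sp: "space Q = space P" by (rule sets_eq_imp_space_eq[OF sQ])
    show ?thesis
    proof (rule dr_mono[OF Qp P sQ X B gm gi g0 g1 h2])
      fix x :: real
      have ev: "{\<omega> \<in> space P. X \<omega> > x} \<in> sets P" using X by measurable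
      have k: "measure Q {\<omega> \<in> space P. X \<omega> > x} \<le> g_phi \<phi> \<delta> (measure P {\<omega> \<in> space P. X \<omega> > x})"
        by (rule key_ineq[OF P a Q d ev])
      define m where "m = measure P {\<omega> \<in> space P. X \<omega> > x}"
      have m01: "0 \<le> m" "m \<le> 1" unfolding m_def using prob_space.prob_le_1[OF P] by auto
      have b1: "m \<le> g_phi \<phi> \<delta> m" "g_phi \<phi> \<delta> m \<le> 1" using g_phi_bounds[OF a d m01] by auto
      have "g_phi \<phi> \<delta> m \<in> {0..1}" using b1 m01 by simp
      then have r: "g_phi \<phi> \<delta> (measure P {\<omega> \<in> space P. X \<omega> > x}) \<in> {0..1}"
        unfolding m_def .
      have "g (measure Q {\<omega> \<in> space P. X \<omega> > x}) \<le> g (g_phi \<phi> \<delta> (measure P {\<omega> \<in> space P. X \<omega> > x}))"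
        by (rule mono_onD[OF gm _ r k]) simp
      then show "g (measure Q {\<omega> \<in> space Q. X \<omega> > x}) \<le> (g \<circ> g_phi \<phi> \<delta>) (measure P {\<omega> \<in> space P. X \<omega> > x})"
        using sp by simp
    qed
  qed
  have ne: "phi_ball \<phi> P \<delta> \<noteq> {}" using P_in_ball[OF P a d] by auto
  show "(SUP Q \<in> phi_ball \<phi> P \<delta>. distortion_risk g Q X) \<le> distortion_risk (g \<circ> g_phi \<phi> \<delta>) P X"
    by (rule cSUP_least[OF ne each])
  show "distortion_risk g P X \<le> (SUP Q \<in> phi_ball \<phi> P \<delta>. distortion_risk g Q X)"
    by (rule cSUP_upper[OF P_in_ball[OF P a d]]) (use each in \<open>auto intro!: bdd_aboveI2\<close>)
qed

lemma dr_bound: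
  fixes X :: "'a \<Rightarrow> real" and h :: "real \<Rightarrow> real"
  assumes Q: "prob_space Q" and B: "\<forall>\<omega>\<in>space Q. \<bar>X \<omega>\<bar> \<le> B"
    and h: "h ` {0..1} \<subseteq> {0..1}" "h 0 = 0" "h 1 = 1"
  shows "\<bar>indicator {0..} x * h (measure Q {\<omega> \<in> space Q. X \<omega> > x})\<bar> \<le> indicator {-\<bar>B\<bar>..\<bar>B\<bar>} x"
    and "\<bar>indicator {..0} x * (h (measure Q {\<omega> \<in> space Q. X \<omega> > x}) - 1)\<bar> \<le> indicator {-\<bar>B\<bar>..\<bar>B\<bar>} x"
proof -
  interpret Q: prob_space Q by (rule Q)
  define S where "S = (\<lambda>x. measure Q {\<omega> \<in> space Q. X \<omega> > x})"
  have Sd: "\<And>x. measure Q {\<omega> \<in> space Q. X \<omega> > x} = S x" by (simp add: S_def)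
  have S01: "S x \<in> {0..1}" for x unfolding S_def by simp
  define C where "C = \<bar>B\<bar>"
  have S0: "S x = 0" if "C \<le> x" for x
  proof -
    have e: "{\<omega> \<in> space Q. X \<omega> > x} = {}" using B that by (force simp: C_def)
    show ?thesis unfolding S_def e by simp
  qed
  have S1: "S x = 1" if "x < - C" for x
  proof -
    have e: "{\<omega> \<in> space Q. X \<omega> > x} = space Q" using B that by (force simp: C_def)
    show ?thesis unfolding S_def e by (simp add: Q.prob_space)
  qed
  have hb: "\<bar>h (S x)\<bar> \<le> 1" for x using h(1) S01[of x] by force
  have hb2: "\<bar>h (S x) - 1\<bar> \<le> 1" for x using h(1) S01[of x] by force
  show "\<bar>indicator {0..} x * h (measure Q {\<omega> \<in> space Q. X \<omega> > x})\<bar> \<le> indicator {-\<bar>B\<bar>..\<bar>B\<bar>} x"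
    unfolding Sd C_def[symmetric]
    using hb[of x] S0[of x] h(2) by (cases "0 \<le> x"; cases "C \<le> x") (auto simp: indicator_def C_def)
  show "\<bar>indicator {..0} x * (h (measure Q {\<omega> \<in> space Q. X \<omega> > x}) - 1)\<bar> \<le> indicator {-\<bar>B\<bar>..\<bar>B\<bar>} x"
    unfolding Sd C_def[symmetric]
    using hb2[of x] S1[of x] h(3) by (cases "x \<le> 0"; cases "x < - C") (auto simp: indicator_def C_def)
qed

lemma dr_tendsto:
  fixes X :: "'a \<Rightarrow> real" and h :: "real \<Rightarrow> real \<Rightarrow> real" and h0 :: "real \<Rightarrow> real"
  assumes P: "prob_space P" and X: "X \<in> borel_measurable P" and B: "\<forall>\<omega>\<in>space P. \<bar>X \<omega>\<bar> \<le> B"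
    and hd: "\<And>d. 0 < d \<Longrightarrow> mono_on {0..1} (h d) \<and> h d ` {0..1} \<subseteq> {0..1} \<and> h d 0 = 0 \<and> h d 1 = 1"
    and h0: "mono_on {0..1} h0" "h0 ` {0..1} \<subseteq> {0..1}" "h0 0 = 0" "h0 1 = 1"
    and lim: "\<And>y. y \<in> {0..1} \<Longrightarrow> ((\<lambda>d. h d y) \<longlongrightarrow> h0 y) (at_right 0)"
  shows "((\<lambda>d. distortion_risk (h d) P X) \<longlongrightarrow> distortion_risk h0 P X) (at_right 0)"
proof (rule tendsto_at_right_sequentially[of 0 1])
  show "(0::real) < 1" by simp
  fix S :: "nat \<Rightarrow> real" assume S0: "\<And>n. 0 < S n" and S1: "\<And>n. S n < 1" and "decseq S" and Sl: "S \<longlonglongrightarrow> 0"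
  interpret P: prob_space P by (rule P)
  define sv where "sv = (\<lambda>x. measure P {\<omega> \<in> space P. X \<omega> > x})"
  have sv01: "sv x \<in> {0..1}" for x unfolding sv_def by simp
  have fS: "filterlim S (at_right 0) sequentially"
    by (rule tendsto_imp_filterlim_at_right[OF Sl]) (use S0 in auto)
  have pl: "(\<lambda>n. h (S n) (sv x)) \<longlonglongrightarrow> h0 (sv x)" for x
    using filterlim_compose[OF lim[OF sv01[of x]] fS] .
  have hS: "mono_on {0..1} (h (S n))" "h (S n) ` {0..1} \<subseteq> {0..1}" "h (S n) 0 = 0" "h (S n) 1 = 1" for n
    using hd[OF S0[of n]] by auto
  have Ci: "integrable lborel (indicator {-\<bar>B\<bar>..\<bar>B\<bar>} :: real \<Rightarrow> real)"
    by (rule integrable_real_indicator) (auto simp: emeasure_lborel_Icc_eq)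
  have m0: "(\<lambda>x. h0 (sv x)) \<in> borel_measurable borel" unfolding sv_def by (rule dr_integrable(3)[OF P X B h0])
  have mS: "(\<lambda>x. h (S n) (sv x)) \<in> borel_measurable borel" for n unfolding sv_def by (rule dr_integrable(3)[OF P X B hS])
  have t1: "(\<lambda>n. LINT x:{0..}|lborel. h (S n) (sv x)) \<longlonglongrightarrow> (LINT x:{0..}|lborel. h0 (sv x))"
    unfolding set_lebesgue_integral_def
  proof (rule integral_dominated_convergence[where w="indicator {-\<bar>B\<bar>..\<bar>B\<bar>}"])
    show "(\<lambda>x. indicator {0..} x *\<^sub>R h0 (sv x)) \<in> borel_measurable lborel" using m0 by measurable
    show "(\<lambda>x. indicator {0..} x *\<^sub>R h (S n) (sv x)) \<in> borel_measurable lborel" for n using mS by measurable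
    show "integrable lborel (indicator {-\<bar>B\<bar>..\<bar>B\<bar>} :: real \<Rightarrow> real)" by (rule Ci)
    show "AE x in lborel. (\<lambda>n. indicator {0..} x *\<^sub>R h (S n) (sv x)) \<longlonglongrightarrow> indicator {0..} x *\<^sub>R h0 (sv x)"
      by (rule AE_I2) (intro tendsto_intros pl)
    show "AE x in lborel. norm (indicator {0..} x *\<^sub>R h (S n) (sv x)) \<le> indicator {-\<bar>B\<bar>..\<bar>B\<bar>} x" for n
      by (rule AE_I2) (use dr_bound(1)[OF P B hS(2-4)[of n]] in \<open>simp add: sv_def\<close>)
  qed
  have t2: "(\<lambda>n. LINT x:{..0}|lborel. h (S n) (sv x) - 1) \<longlonglongrightarrow> (LINT x:{..0}|lborel. h0 (sv x) - 1)"
    unfolding set_lebesgue_integral_def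
  proof (rule integral_dominated_convergence[where w="indicator {-\<bar>B\<bar>..\<bar>B\<bar>}"])
    show "(\<lambda>x. indicator {..0} x *\<^sub>R (h0 (sv x) - 1)) \<in> borel_measurable lborel" using m0 by measurable
    show "(\<lambda>x. indicator {..0} x *\<^sub>R (h (S n) (sv x) - 1)) \<in> borel_measurable lborel" for n using mS by measurable
    show "integrable lborel (indicator {-\<bar>B\<bar>..\<bar>B\<bar>} :: real \<Rightarrow> real)" by (rule Ci)
    show "AE x in lborel. (\<lambda>n. indicator {..0} x *\<^sub>R (h (S n) (sv x) - 1)) \<longlonglongrightarrow> indicator {..0} x *\<^sub>R (h0 (sv x) - 1)"
      by (rule AE_I2) (intro tendsto_intros pl)
    show "AE x in lborel. norm (indicator {..0} x *\<^sub>R (h (S n) (sv x) - 1)) \<le> indicator {-\<bar>B\<bar>..\<bar>B\<bar>} x" for n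
      by (rule AE_I2) (use dr_bound(2)[OF P B hS(2-4)[of n]] in \<open>simp add: sv_def\<close>)
  qed
  show "(\<lambda>n. distortion_risk (h (S n)) P X) \<longlonglongrightarrow> distortion_risk h0 P X"
    unfolding distortion_risk_def using tendsto_add[OF t1 t2] by (simp add: sv_def)
qed

lemma domphi_fin: "(\<forall>x\<ge>0. \<phi> x \<noteq> \<infinity>) \<Longrightarrow> 0 \<le> x \<Longrightarrow> x \<in> domphi \<phi>"
  unfolding domphi_def by auto

lemma Fb_nonneg:
  assumes a: "admissible_phi \<phi>" and fin: "\<forall>x\<ge>0. \<phi> x \<noteq> \<infinity>" and x: "0 < x" "x < 1" and t: "x \<le> t" "t \<le> 1"
  shows "0 \<le> Fb \<phi> x t"
proof -
  have D1: "t / x \<in> domphi \<phi>" "(1 - t) / (1 - x) \<in> domphi \<phi>" using x t by (auto intro!: domphi_fin[OF fin])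
  have e: "x * (t / x) + (1 - x) * ((1 - t) / (1 - x)) = 1" using x by simp
  show ?thesis using domphi_conv(2)[OF a D1, of x] x e psi_one[OF a] unfolding Fb_def by simp
qed

lemma Fb_pos:
  assumes a: "admissible_phi \<phi>" and fin: "\<forall>x\<ge>0. \<phi> x \<noteq> \<infinity>" and sc: "strictly_convex_ereal_nonneg \<phi>"
    and x: "0 < x" "x < t" "t \<le> 1"
  shows "0 < Fb \<phi> x t"
proof -
  have x1: "x < 1" using x by simp
  have D1: "t / x \<in> domphi \<phi>" "(1 - t) / (1 - x) \<in> domphi \<phi>" using x by (auto intro!: domphi_fin[OF fin])
  have e: "x * (t / x) + (1 - x) * ((1 - t) / (1 - x)) = 1" using x x1 by simp
  have ne: "t / x \<noteq> (1 - t) / (1 - x)"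
  proof -
    have "1 < t / x" using x by simp
    moreover have "(1 - t) / (1 - x) < 1" using x x1 by simp
    ultimately show ?thesis by simp
  qed
  have "\<phi> (x * (t / x) + (1 - x) * ((1 - t) / (1 - x))) < ereal x * \<phi> (t / x) + ereal (1 - x) * \<phi> ((1 - t) / (1 - x))"
  proof -
    have sc': "\<And>u v w. 0 \<le> u \<Longrightarrow> 0 \<le> v \<Longrightarrow> u \<noteq> v \<Longrightarrow> 0 < w \<Longrightarrow> w < 1 \<Longrightarrow>
        \<phi> (w * u + (1 - w) * v) < ereal w * \<phi> u + ereal (1 - w) * \<phi> v"
      using sc unfolding strictly_convex_ereal_nonneg_def by auto
    show ?thesis by (rule sc'[OF _ _ ne x(1) x1]) (use x x1 in auto)
  qed
  then have "\<phi> 1 < ereal (Fb \<phi> x t)" unfolding e Fb_def using domphi_eq[OF a D1(1)] domphi_eq[OF a D1(2)] by simp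
  then show ?thesis using adm_one[OF a] by simp
qed

lemma Fb_mono:
  assumes a: "admissible_phi \<phi>" and fin: "\<forall>x\<ge>0. \<phi> x \<noteq> \<infinity>"
    and x: "0 < x" "x < t0" "t0 \<le> t" "t \<le> 1"
  shows "Fb \<phi> x t0 \<le> Fb \<phi> x t"
proof -
  have x1: "x < 1" using x by simp
  define l where "l = (t - t0) / (t - x)"
  have tx: "0 < t - x" using x by simp
  have l: "0 \<le> l" "l \<le> 1" using x tx by (auto simp: l_def divide_simps)
  have tl: "t0 = l * x + (1 - l) * t"
  proof -
    have "1 - l = (t0 - x) / (t - x)" using tx by (simp add: l_def field_simps)
    then have "l * x + (1 - l) * t = ((t - t0) * x + (t0 - x) * t) / (t - x)"
      using tx by (simp add: l_def add_divide_distrib)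
    also have "(t - t0) * x + (t0 - x) * t = t0 * (t - x)" by (simp add: algebra_simps)
    finally show ?thesis using tx by simp
  qed
  have D1: "t / x \<in> domphi \<phi>" "(1 - t) / (1 - x) \<in> domphi \<phi>" using x by (auto intro!: domphi_fin[OF fin])
  have e1: "t0 / x = l * 1 + (1 - l) * (t / x)" using x tl by (simp add: field_simps)
  have e2: "(1 - t0) / (1 - x) = l * 1 + (1 - l) * ((1 - t) / (1 - x))"
  proof -
    have n: "1 - x \<noteq> 0" using x1 by simp
    have "1 - t0 = l * (1 - x) + (1 - l) * (1 - t)" using tl by (simp add: algebra_simps)
    then show ?thesis using n by (simp add: field_simps)
  qed
  have c1: "psi \<phi> (t0 / x) \<le> (1 - l) * psi \<phi> (t / x)"
    using domphi_conv(2)[OF a one_domphi[OF a] D1(1) l] e1 psi_one[OF a] by simp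
  have c2: "psi \<phi> ((1 - t0) / (1 - x)) \<le> (1 - l) * psi \<phi> ((1 - t) / (1 - x))"
    using domphi_conv(2)[OF a one_domphi[OF a] D1(2) l] e2 psi_one[OF a] by simp
  have "Fb \<phi> x t0 \<le> (1 - l) * Fb \<phi> x t"
  proof -
    have "x * psi \<phi> (t0 / x) \<le> x * ((1 - l) * psi \<phi> (t / x))" using mult_left_mono[OF c1] x by simp
    moreover have "(1 - x) * psi \<phi> ((1 - t0) / (1 - x)) \<le> (1 - x) * ((1 - l) * psi \<phi> ((1 - t) / (1 - x)))"
      using mult_left_mono[OF c2] x1 by simp
    ultimately show ?thesis unfolding Fb_def by (simp add: algebra_simps)
  qed
  also have "\<dots> \<le> Fb \<phi> x t"
    using Fb_nonneg[OF a fin x(1) x1, of t] x l by (simp add: mult_left_le_one_le)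
  finally show ?thesis .
qed

lemma g_phi_small:
  assumes a: "admissible_phi \<phi>" and fin: "\<forall>x\<ge>0. \<phi> x \<noteq> \<infinity>" and sc: "strictly_convex_ereal_nonneg \<phi>"
    and x: "0 < x" "x < t0" "t0 \<le> 1" and d: "0 < d" "d < Fb \<phi> x t0"
  shows "g_phi \<phi> d x \<le> t0"
proof -
  have x1: "x < 1" using x by simp
  have "Sup (Gs \<phi> d x) \<le> t0"
  proof (rule cSup_least)
    show "Gs \<phi> d x \<noteq> {}" using self_Gs[OF a x(1) x1, of d] d by auto
    fix t assume t: "t \<in> Gs \<phi> d x"
    show "t \<le> t0"
    proof (rule ccontr)
      assume "\<not> t \<le> t0"
      then have tt: "t0 \<le> t" by simp
      have t1: "x \<le> t" "t \<le> 1" using t unfolding Gs_def by auto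
      have "Fb \<phi> x t \<le> d" using Gs_iff[OF a x(1) x1 t1] t by simp
      moreover have "Fb \<phi> x t0 \<le> Fb \<phi> x t" by (rule Fb_mono[OF a fin x(1,2) tt t1(2)])
      ultimately show False using d by simp
    qed
  qed
  then show ?thesis using g_phi_Gs[OF x(1) x1] by simp
qed

lemma gcomp_lim:
  assumes a: "admissible_phi \<phi>" and fin: "\<forall>x\<ge>0. \<phi> x \<noteq> \<infinity>" and sc: "strictly_convex_ereal_nonneg \<phi>"
    and g: "distortion_fun g" and rc: "\<forall>x\<in>{0..<1}. continuous (at_right x) g"
    and y: "y \<in> {0..1}"
  shows "((\<lambda>d. (g \<circ> g_phi \<phi> d) y) \<longlongrightarrow> g y) (at_right 0)"
proof (cases "y = 0 \<or> y = 1")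
  case True
  then have "(\<lambda>d. (g \<circ> g_phi \<phi> d) y) = (\<lambda>d. g y)" by (auto simp: g_phi_def)
  then show ?thesis by simp
next
  case False
  then have y': "0 < y" "y < 1" using y by auto
  have gm: "mono_on {0..1} g" using g unfolding distortion_fun_def by auto
  have cr: "(g \<longlongrightarrow> g y) (at_right y)" using rc y' by (simp add: continuous_within)
  show ?thesis
  proof (rule tendstoI)
    fix e :: real assume e: "0 < e"
    have "eventually (\<lambda>z. dist (g z) (g y) < e) (at_right y)" using tendstoD[OF cr e] .
    then obtain b where b: "y < b" "\<And>z. y < z \<Longrightarrow> z < b \<Longrightarrow> dist (g z) (g y) < e"
      using eventually_at_right[of y 1] y' by auto
    define t0 where "t0 = min ((y + b) / 2) ((y + 1) / 2)"
    have t0a: "t0 \<le> (y + b) / 2" "t0 \<le> (y + 1) / 2" "t0 = (y + b) / 2 \<or> t0 = (y + 1) / 2"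
      unfolding t0_def by (simp_all add: min_def)
    have t0: "y < t0" "t0 < b" "t0 \<le> 1" using b(1) y' t0a by auto
    define \<eta> where "\<eta> = Fb \<phi> y t0"
    have eta: "0 < \<eta>" unfolding \<eta>_def by (rule Fb_pos[OF a fin sc y'(1) t0(1) t0(3)])
    have "eventually (\<lambda>d. d \<in> {0<..<\<eta>}) (at_right 0)" by (rule eventually_at_right_real[OF eta])
    then show "eventually (\<lambda>d. dist ((g \<circ> g_phi \<phi> d) y) (g y) < e) (at_right 0)"
    proof eventually_elim
      case (elim d)
      then have d: "0 < d" "d < Fb \<phi> y t0" by (auto simp: \<eta>_def)
      have up: "g_phi \<phi> d y \<le> t0" by (rule g_phi_small[OF a fin sc y'(1) t0(1) t0(3) d])
      have lo: "y \<le> g_phi \<phi> d y" using g_phi_bounds(1)[OF a, of d y] d y' by simp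
      show ?case
      proof (cases "g_phi \<phi> d y = y")
        case True then show ?thesis using e by simp
      next
        case False
        then have "y < g_phi \<phi> d y" using lo by simp
        moreover have "g_phi \<phi> d y < b" using up t0 by simp
        ultimately show ?thesis using b(2) by simp
      qed
    qed
  qed
qed

theorem mainTheorem7:
  fixes P :: "'a measure" and g :: "real \<Rightarrow> real" and \<phi> :: "real \<Rightarrow> ereal"
    and \<delta> :: real and X :: "'a \<Rightarrow> real"
  assumes P: "prob_space P"
    and g: "distortion_fun g"
    and \<delta>: "\<delta> > 0"
    and \<phi>: "admissible_phi \<phi>"
    and X: "X \<in> borel_measurable P" "\<exists>B. \<forall>\<omega>\<in>space P. \<bar>X \<omega>\<bar> \<le> B"
  shows "(SUP Q \<in> phi_ball \<phi> P \<delta>. distortion_risk g Q X) \<le> distortion_risk (g \<circ> g_phi \<phi> \<delta>) P X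
       \<and> ((\<forall>x\<ge>0. \<phi> x \<noteq> \<infinity>) \<and> strictly_convex_ereal_nonneg \<phi>
         \<and> ((\<lambda>x. \<phi> x / ereal x) \<longlongrightarrow> \<infinity>) at_top
         \<and> (\<forall>x\<in>{0..<1}. continuous (at_right x) g) \<longrightarrow>
         ((\<lambda>d. SUP Q \<in> phi_ball \<phi> P d. distortion_risk g Q X) \<longlongrightarrow> distortion_risk g P X) (at_right 0)
       \<and> ((\<lambda>d. distortion_risk (g \<circ> g_phi \<phi> d) P X) \<longlongrightarrow> distortion_risk g P X) (at_right 0))"
proof -
  obtain B where B: "\<forall>\<omega>\<in>space P. \<bar>X \<omega>\<bar> \<le> B" using X(2) by blast
  have d0: "0 \<le> \<delta>" using \<delta> by simp
  have gm: "mono_on {0..1} g" and gi: "g ` {0..1} \<subseteq> {0..1}" and g0: "g 0 = 0" and g1: "g 1 = 1"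
    using g unfolding distortion_fun_def by auto
  have p1: "(SUP Q \<in> phi_ball \<phi> P \<delta>. distortion_risk g Q X) \<le> distortion_risk (g \<circ> g_phi \<phi> \<delta>) P X"
    by (rule part1(1)[OF P g d0 \<phi> X(1) B])
  moreover have "((\<forall>x\<ge>0. \<phi> x \<noteq> \<infinity>) \<and> strictly_convex_ereal_nonneg \<phi>
         \<and> ((\<lambda>x. \<phi> x / ereal x) \<longlongrightarrow> \<infinity>) at_top
         \<and> (\<forall>x\<in>{0..<1}. continuous (at_right x) g) \<longrightarrow>
         ((\<lambda>d. SUP Q \<in> phi_ball \<phi> P d. distortion_risk g Q X) \<longlongrightarrow> distortion_risk g P X) (at_right 0)
       \<and> ((\<lambda>d. distortion_risk (g \<circ> g_phi \<phi> d) P X) \<longlongrightarrow> distortion_risk g P X) (at_right 0))"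
  proof (intro impI)
    assume H: "(\<forall>x\<ge>0. \<phi> x \<noteq> \<infinity>) \<and> strictly_convex_ereal_nonneg \<phi>
         \<and> ((\<lambda>x. \<phi> x / ereal x) \<longlongrightarrow> \<infinity>) at_top
         \<and> (\<forall>x\<in>{0..<1}. continuous (at_right x) g)"
    then have fin: "\<forall>x\<ge>0. \<phi> x \<noteq> \<infinity>" and sc: "strictly_convex_ereal_nonneg \<phi>"
      and rc: "\<forall>x\<in>{0..<1}. continuous (at_right x) g" by auto
    have T: "((\<lambda>d. distortion_risk (g \<circ> g_phi \<phi> d) P X) \<longlongrightarrow> distortion_risk g P X) (at_right 0)"
    proof (rule dr_tendsto[where h="\<lambda>d. g \<circ> g_phi \<phi> d", OF P X(1) B _ gm gi g0 g1])
      fix d :: real assume "0 < d"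
      then have "0 \<le> d" by simp
      note c = comp_dist[OF g \<phi> this]
      show "mono_on {0..1} (g \<circ> g_phi \<phi> d) \<and> (g \<circ> g_phi \<phi> d) ` {0..1} \<subseteq> {0..1} \<and>
          (g \<circ> g_phi \<phi> d) 0 = 0 \<and> (g \<circ> g_phi \<phi> d) 1 = 1" using c by blast
    next
      fix y :: real assume "y \<in> {0..1}"
      then show "((\<lambda>d. (g \<circ> g_phi \<phi> d) y) \<longlongrightarrow> g y) (at_right 0)"
        by (rule gcomp_lim[OF \<phi> fin sc g rc])
    qed
    have S: "((\<lambda>d. SUP Q \<in> phi_ball \<phi> P d. distortion_risk g Q X) \<longlongrightarrow> distortion_risk g P X) (at_right 0)"
    proof (rule tendsto_sandwich[OF _ _ tendsto_const T])
      show "\<forall>\<^sub>F d in at_right 0. distortion_risk g P X \<le> (SUP Q \<in> phi_ball \<phi> P d. distortion_risk g Q X)"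
        using eventually_at_right_less[of "0::real"]
        by eventually_elim (rule part1(2)[OF P g _ \<phi> X(1) B], simp)
      show "\<forall>\<^sub>F d in at_right 0. (SUP Q \<in> phi_ball \<phi> P d. distortion_risk g Q X) \<le> distortion_risk (g \<circ> g_phi \<phi> d) P X"
        using eventually_at_right_less[of "0::real"]
        by eventually_elim (rule part1(1)[OF P g _ \<phi> X(1) B], simp)
    qed
    show "((\<lambda>d. SUP Q \<in> phi_ball \<phi> P d. distortion_risk g Q X) \<longlongrightarrow> distortion_risk g P X) (at_right 0)
       \<and> ((\<lambda>d. distortion_risk (g \<circ> g_phi \<phi> d) P X) \<longlongrightarrow> distortion_risk g P X) (at_right 0)"
      using S T by blast
  qed
  ultimately show ?thesis by blast
qed

end
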